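(* Let $G=(V,E)$ be a simple graph with $|V|=n$, adjacency matrix $A$, and let $D$ be the diagonal matrix of vertex degrees of $G$. A vector $x\in\{0,1\}^n$ solves $\mathrm{LCP}(A+I,-\mathbf{e})$ if and only if $$0\leq (A+I)x-\mathbf{e}\leq (D-I)(\mathbf{e}-x),$$ where $I$ is the $n\times n$ identity and $\mathbf{e}$ the all-ones vector.
   Context: $x$ solves $\mathrm{LCP}(A+I,-\mathbf{e})$ iff $x\geq 0$, $(A+I)x\geq\mathbf{e}$ and $x^\top((A+I)x-\mathbf{e})=0$. Inequalities between vectors are componentwise. *)

theory Defs
  imports "HOL-Analysis.Analysis"
begin

definition simple_graph :: "('n \<Rightarrow> 'n \<Rightarrow> bool) \<Rightarrow> bool" where
  "simple_graph E \<longleftrightarrow> (\<forall>u v. E u v \<longleftrightarrow> E v u) \<and> (\<forall>v. \<not> E v v)"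

definition adj_matrix :: "('n::finite \<Rightarrow> 'n \<Rightarrow> bool) \<Rightarrow> real^'n^'n" where
  "adj_matrix E = (\<chi> i j. if E i j then 1 else 0)"

definition degree :: "('n::finite \<Rightarrow> 'n \<Rightarrow> bool) \<Rightarrow> 'n \<Rightarrow> nat" where
  "degree E v = card {u. E v u}"

definition degree_matrix :: "('n::finite \<Rightarrow> 'n \<Rightarrow> bool) \<Rightarrow> real^'n^'n" where
  "degree_matrix E = (\<chi> i j. if i = j then real (degree E i) else 0)"

definition ones_vec :: "real^'n" where
  "ones_vec = (\<chi> i. 1)"

definition solves_LCP :: "real^'n^'n \<Rightarrow> real^'n \<Rightarrow> real^'n::finite \<Rightarrow> bool" where
  "solves_LCP M q x \<longleftrightarrow> (\<forall>i. 0 \<le> x $ i) \<and> (\<forall>i. 0 \<le> (M *v x + q) $ i)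
     \<and> x \<bullet> (M *v x + q) = 0"

end

theory Submission
  imports Defs
begin

lemma mv_comp:
  fixes E :: "'n::finite \<Rightarrow> 'n \<Rightarrow> bool" and x :: "real^'n"
  shows "((adj_matrix E + mat 1) *v x) $ i = x $ i + (\<Sum>j\<in>{j. E i j}. x $ j)"
proof -
  have "((adj_matrix E + mat 1) *v x) $ i = (\<Sum>j\<in>UNIV. (if E i j then 1 else 0) * x $ j + (if i = j then 1 else 0) * x $ j)"
    by (simp add: matrix_vector_mult_def adj_matrix_def mat_def algebra_simps)
  also have "\<dots> = (\<Sum>j\<in>UNIV. (if E i j then x $ j else 0) + (if i = j then x $ j else 0))"
    by (rule sum.cong) auto
  also have "\<dots> = (\<Sum>j\<in>UNIV. (if E i j then x $ j else 0)) + (\<Sum>j\<in>UNIV. (if i = j then x $ j else 0))"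
    by (simp add: sum.distrib)
  also have "\<dots> = (\<Sum>j\<in>{j. E i j}. x $ j) + x $ i"
    by (simp add: sum.If_cases)
  finally show ?thesis by simp
qed

lemma dm_comp:
  fixes E :: "'n::finite \<Rightarrow> 'n \<Rightarrow> bool" and x :: "real^'n"
  shows "((degree_matrix E - mat 1) *v (ones_vec - x)) $ i = (real (degree E i) - 1) * (1 - x $ i)"
proof -
  have "((degree_matrix E - mat 1) *v (ones_vec - x)) $ i =
     (\<Sum>j\<in>UNIV. ((if i = j then real (degree E i) else 0) - (if i = j then 1 else 0)) * (1 - x $ j))"
    by (simp add: matrix_vector_mult_def degree_matrix_def mat_def ones_vec_def)
  also have "\<dots> = (\<Sum>j\<in>UNIV. (if i = j then (real (degree E i) - 1) * (1 - x $ j) else 0))"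
    by (rule sum.cong) auto
  also have "\<dots> = (real (degree E i) - 1) * (1 - x $ i)" by simp
  finally show ?thesis .
qed

theorem lemma7:
  fixes E :: "'n::finite \<Rightarrow> 'n \<Rightarrow> bool" and x :: "real^'n"
  assumes "simple_graph E"
    and "\<forall>i. x $ i = 0 \<or> x $ i = 1"
  shows "solves_LCP (adj_matrix E + mat 1) (- ones_vec) x \<longleftrightarrow>
    (\<forall>i. 0 \<le> ((adj_matrix E + mat 1) *v x - ones_vec) $ i \<and>
         ((adj_matrix E + mat 1) *v x - ones_vec) $ i
           \<le> ((degree_matrix E - mat 1) *v (ones_vec - x)) $ i)"
proof -
  define s where "s i = (\<Sum>j\<in>{j. E i j}. x $ j)" for i
  have x01: "0 \<le> x $ j \<and> x $ j \<le> 1" for j using assms(2)[rule_format, of j] by auto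
  have sd: "s i \<le> real (degree E i)" for i
  proof -
    have "s i \<le> (\<Sum>j\<in>{j. E i j}. 1)" unfolding s_def 
      by (intro sum_mono) (simp add: x01)
    thus ?thesis by (simp add: degree_def)
  qed
  define y where "y = (adj_matrix E + mat 1) *v x - ones_vec"
  have yc: "y $ i = x $ i + s i - 1" for i
    by (simp add: y_def mv_comp s_def ones_vec_def)
  have yeq: "(adj_matrix E + mat 1) *v x + - ones_vec = y" by (simp add: y_def)
  have dot: "x \<bullet> y = (\<Sum>i\<in>UNIV. x $ i * y $ i)" by (simp add: inner_vec_def)
  show ?thesis
  proof
    assume L: "solves_LCP (adj_matrix E + mat 1) (- ones_vec) x"
    hence ynn: "\<forall>i. 0 \<le> y $ i" and z: "x \<bullet> y = 0" unfolding solves_LCP_def yeq by auto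
    have tn: "\<forall>i\<in>UNIV. 0 \<le> x $ i * y $ i" using ynn x01 by simp
    have "\<forall>i\<in>UNIV. x $ i * y $ i = 0" using z tn unfolding dot
      by (subst (asm) sum_nonneg_eq_0_iff) auto
    show "\<forall>i. 0 \<le> ((adj_matrix E + mat 1) *v x - ones_vec) $ i \<and>
         ((adj_matrix E + mat 1) *v x - ones_vec) $ i
           \<le> ((degree_matrix E - mat 1) *v (ones_vec - x)) $ i"
    proof
      fix i
      have "x $ i * y $ i = 0" using \<open>\<forall>i\<in>UNIV. x $ i * y $ i = 0\<close> by simp
      then show "0 \<le> ((adj_matrix E + mat 1) *v x - ones_vec) $ i \<and>
         ((adj_matrix E + mat 1) *v x - ones_vec) $ i
           \<le> ((degree_matrix E - mat 1) *v (ones_vec - x)) $ i"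
        using ynn[rule_format, of i] yc[of i] sd[of i] assms(2)[rule_format, of i]
        unfolding y_def dm_comp by auto
    qed
  next
    assume R: "\<forall>i. 0 \<le> ((adj_matrix E + mat 1) *v x - ones_vec) $ i \<and>
         ((adj_matrix E + mat 1) *v x - ones_vec) $ i
           \<le> ((degree_matrix E - mat 1) *v (ones_vec - x)) $ i"
    hence ynn: "\<forall>i. 0 \<le> y $ i" and yle: "\<And>i. y $ i \<le> (real (degree E i) - 1) * (1 - x $ i)"
      unfolding y_def dm_comp by auto
    have "\<forall>i\<in>UNIV. x $ i * y $ i = 0"
    proof
      fix i
      show "x $ i * y $ i = 0"
        using ynn[rule_format, of i] yle[of i] assms(2)[rule_format, of i] by auto
    qed
    hence "x \<bullet> y = 0" unfolding dot by (intro sum.neutral) blast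
    moreover have "\<forall>i. 0 \<le> x $ i" using x01 by simp
    ultimately show "solves_LCP (adj_matrix E + mat 1) (- ones_vec) x"
      unfolding solves_LCP_def yeq using ynn by auto
  qed
qed

end
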